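(* Let $T$ be a tournament with $n$ vertices and $t$ directed triangles, where $3t\geq n$. Then $$\alpha(T)\geq \frac{2}{3}\,n\sqrt{\frac{n}{3t}}.$$
   Context: A tournament is an orientation of a complete graph. A directed triangle is a directed cycle of length $3$. A subset $S\subseteq V(T)$ is acyclic if $T[S]$ contains no directed cycle; $\alpha(T)$ is the maximum size of an acyclic subset of $V(T)$. *)

theory Defs
  imports Main "HOL-Library.Disjoint_Sets" Complex_Main
begin

definition tournament :: "'a set \<Rightarrow> ('a \<Rightarrow> 'a \<Rightarrow> bool) \<Rightarrow> bool" where
  "tournament V E \<longleftrightarrow> finite V
     \<and> (\<forall>x y. E x y \<longrightarrow> x \<in> V \<and> y \<in> V)
     \<and> (\<forall>x\<in>V. \<not> E x x)
     \<and> (\<forall>x\<in>V. \<forall>y\<in>V. x \<noteq> y \<longrightarrow> (E x y \<longleftrightarrow> \<not> E y x))"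

definition directed_triangles :: "'a set \<Rightarrow> ('a \<Rightarrow> 'a \<Rightarrow> bool) \<Rightarrow> 'a set set" where
  "directed_triangles V E = {{x, y, z} | x y z.
      x \<in> V \<and> y \<in> V \<and> z \<in> V \<and> E x y \<and> E y z \<and> E z x}"

definition induced_arcs :: "('a \<Rightarrow> 'a \<Rightarrow> bool) \<Rightarrow> 'a set \<Rightarrow> ('a \<times> 'a) set" where
  "induced_arcs E S = {(x, y). x \<in> S \<and> y \<in> S \<and> E x y}"

definition acyclic_set :: "'a set \<Rightarrow> ('a \<Rightarrow> 'a \<Rightarrow> bool) \<Rightarrow> 'a set \<Rightarrow> bool" where
  "acyclic_set V E S \<longleftrightarrow> S \<subseteq> V \<and> acyclic (induced_arcs E S)"

definition alpha :: "'a set \<Rightarrow> ('a \<Rightarrow> 'a \<Rightarrow> bool) \<Rightarrow> nat" where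
  "alpha V E = Max (card ` {S. acyclic_set V E S})"

end

theory Submission
  imports Defs
begin

lemma weight_sum:
  fixes p :: real
  assumes "finite V" "A \<subseteq> V"
  shows "(\<Sum>S\<in>Pow V. if A \<subseteq> S then p ^ card S * (1-p) ^ card (V - S) else 0) = p ^ card A"
proof -
  define f2 where "f2 = (\<lambda>v. if v \<in> A then 0 else 1 - p)"
  have "(\<Prod>v\<in>V. p + f2 v) = (\<Sum>S\<in>Pow V. (\<Prod>v\<in>S. p) * (\<Prod>v\<in>V-S. f2 v))"
    by (rule prod_add[OF assms(1)])
  also have "\<dots> = (\<Sum>S\<in>Pow V. if A \<subseteq> S then p ^ card S * (1-p) ^ card (V - S) else 0)"
  proof (rule sum.cong[OF refl])
    fix S assume S: "S \<in> Pow V"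
    show "(\<Prod>v\<in>S. p) * (\<Prod>v\<in>V-S. f2 v) = (if A \<subseteq> S then p ^ card S * (1-p) ^ card (V - S) else 0)"
    proof (cases "A \<subseteq> S")
      case True
      then have "(\<Prod>v\<in>V-S. f2 v) = (\<Prod>v\<in>V-S. 1 - p)"
        by (intro prod.cong) (auto simp: f2_def)
      then show ?thesis using True by simp
    next
      case False
      then obtain a where "a \<in> A" "a \<notin> S" by auto
      then have "a \<in> V - S" "f2 a = 0" using assms(2) by (auto simp: f2_def)
      then have "(\<Prod>v\<in>V-S. f2 v) = 0" using assms(1)
        by (meson finite_Diff prod_zero)
      then show ?thesis using False by simp
    qed
  qed
  finally have 1: "(\<Prod>v\<in>V. p + f2 v) = (\<Sum>S\<in>Pow V. if A \<subseteq> S then p ^ card S * (1-p) ^ card (V - S) else 0)" .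
  have "(\<Prod>v\<in>V. p + f2 v) = (\<Prod>v\<in>V. if v \<in> A then p else 1)"
    by (intro prod.cong) (auto simp: f2_def)
  also have "\<dots> = (\<Prod>v\<in>A. p)"
    using assms by (simp add: prod.If_cases Int_absorb1)
  also have "\<dots> = p ^ card A" by simp
  finally show ?thesis using 1 by simp
qed

lemma triangle_free_acyclic:
  assumes T: "tournament V E" and SV: "S \<subseteq> V"
    and nt: "\<forall>T\<in>directed_triangles V E. \<not> T \<subseteq> S"
  shows "acyclic_set V E S"
proof -
  let ?R = "induced_arcs E S"
  have irr: "\<And>x. \<not> E x x" using T SV unfolding tournament_def by blast
  have tr: "trans ?R"
  proof (rule transI)
    fix x y z assume "(x, y) \<in> ?R" "(y, z) \<in> ?R"
    then have xyz: "x \<in> S" "y \<in> S" "z \<in> S" "E x y" "E y z" by (auto simp: induced_arcs_def)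
    show "(x, z) \<in> ?R"
    proof (cases "x = z")
      case True
      have "x \<noteq> y" using irr xyz(4) by metis
      then have "\<not> E y x" using xyz T SV unfolding tournament_def by blast
      then show ?thesis using xyz True by simp
    next
      case False
      show ?thesis
      proof (rule ccontr)
        assume "(x, z) \<notin> ?R"
        then have "\<not> E x z" using xyz by (auto simp: induced_arcs_def)
        then have "E z x" using False xyz T SV unfolding tournament_def by blast
        then have "{x, y, z} \<in> directed_triangles V E"
          using xyz SV unfolding directed_triangles_def by blast
        then show False using nt xyz by auto
      qed
    qed
  qed
  have "acyclic ?R"
    unfolding acyclic_def using trancl_id[OF tr] irr by (auto simp: induced_arcs_def)
  then show ?thesis using SV by (simp add: acyclic_set_def)
qed

lemma triangle_card:
  assumes T: "tournament V E" and "X \<in> directed_triangles V E"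
  shows "card X = 3" "X \<subseteq> V"
proof -
  obtain x y z where X: "X = {x,y,z}" "x \<in> V" "y \<in> V" "z \<in> V" "E x y" "E y z" "E z x"
    using assms(2) unfolding directed_triangles_def by blast
  have "x \<noteq> y" "y \<noteq> z" "z \<noteq> x" using X T unfolding tournament_def by blast+
  then show "card X = 3" using X by simp
  show "X \<subseteq> V" using X by simp
qed

lemma alpha_ge:
  assumes T: "tournament V E" and "acyclic_set V E S"
  shows "card S \<le> alpha V E"
proof -
  have fin: "finite V" using T by (simp add: tournament_def)
  have "{S. acyclic_set V E S} \<subseteq> Pow V" by (auto simp: acyclic_set_def)
  then have "finite {S. acyclic_set V E S}" using fin by (meson finite_Pow_iff finite_subset)
  then show ?thesis unfolding alpha_def using assms(2) by (intro Max_ge) auto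
qed

theorem mainTheorem4:
  fixes V :: "'a set" and E :: "'a \<Rightarrow> 'a \<Rightarrow> bool" and n t :: nat
  assumes "tournament V E"
    and "n = card V"
    and "t = card (directed_triangles V E)"
    and "3 * t \<ge> n"
  shows "real (alpha V E) \<ge> 2 / 3 * real n * sqrt (real n / (3 * real t))"
proof (cases "n = 0")
  case True
  then show ?thesis by simp
next
  case False
  define D where "D = directed_triangles V E"
  have fin: "finite V" using assms(1) by (simp add: tournament_def)
  have DV: "D \<subseteq> Pow V" using triangle_card(2)[OF assms(1)] by (auto simp: D_def)
  have finD: "finite D" using DV fin by (meson finite_Pow_iff finite_subset)
  have tpos: "t > 0" using False assms(4) by simp
  define p where "p = sqrt (real n / (3 * real t))"
  have p0: "p \<ge> 0" by (simp add: p_def)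
  have p2: "p^2 = real n / (3 * real t)" by (simp add: p_def)
  define w where "w = (\<lambda>S. p ^ card S * (1-p) ^ card (V - S))"
  define tri where "tri = (\<lambda>S. {T\<in>D. T \<subseteq> S})"
  define f where "f = (\<lambda>S. real (card S) - real (card (tri S)))"
  have wsub: "\<And>A. A \<subseteq> V \<Longrightarrow> (\<Sum>S\<in>Pow V. if A \<subseteq> S then w S else 0) = p ^ card A"
    unfolding w_def using weight_sum[OF fin] by blast
  have w1: "(\<Sum>S\<in>Pow V. w S) = 1" using wsub[of "{}"] by simp
  have "(\<Sum>S\<in>Pow V. w S * real (card S)) = (\<Sum>S\<in>Pow V. \<Sum>v\<in>V. if {v} \<subseteq> S then w S else 0)"
  proof (rule sum.cong[OF refl])
    fix S assume "S \<in> Pow V"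
    then have Seq: "{v\<in>V. v \<in> S} = S" by auto
    have "(\<Sum>v\<in>V. if v \<in> S then 1 else (0::real)) = (\<Sum>v\<in>{v\<in>V. v \<in> S}. 1)"
      using fin by (simp only: sum.inter_filter)
    also have "\<dots> = real (card S)" using Seq by simp
    finally have h: "real (card S) = (\<Sum>v\<in>V. if v \<in> S then 1 else 0)" by simp
    show "w S * real (card S) = (\<Sum>v\<in>V. if {v} \<subseteq> S then w S else 0)"
      unfolding h sum_distrib_left by (intro sum.cong) auto
  qed
  also have "\<dots> = (\<Sum>v\<in>V. \<Sum>S\<in>Pow V. if {v} \<subseteq> S then w S else 0)" by (rule sum.swap)
  also have "\<dots> = (\<Sum>v\<in>V. p)"
  proof (rule sum.cong[OF refl])
    fix v assume "v \<in> V"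
    then have "{v} \<subseteq> V" by simp
    from wsub[OF this] show "(\<Sum>S\<in>Pow V. if {v} \<subseteq> S then w S else 0) = p" by simp
  qed
  finally have wc: "(\<Sum>S\<in>Pow V. w S * real (card S)) = real n * p" using assms(2) by simp
  have "(\<Sum>S\<in>Pow V. w S * real (card (tri S))) = (\<Sum>S\<in>Pow V. \<Sum>X\<in>D. if X \<subseteq> S then w S else 0)"
  proof (rule sum.cong[OF refl])
    fix S assume "S \<in> Pow V"
    have "(\<Sum>X\<in>D. if X \<subseteq> S then 1 else (0::real)) = (\<Sum>X\<in>{X\<in>D. X \<subseteq> S}. 1)"
      using finD by (simp only: sum.inter_filter)
    then have h: "real (card (tri S)) = (\<Sum>X\<in>D. if X \<subseteq> S then 1 else 0)"
      unfolding tri_def by simp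
    show "w S * real (card (tri S)) = (\<Sum>X\<in>D. if X \<subseteq> S then w S else 0)"
      unfolding h sum_distrib_left by (intro sum.cong) auto
  qed
  also have "\<dots> = (\<Sum>X\<in>D. \<Sum>S\<in>Pow V. if X \<subseteq> S then w S else 0)" by (rule sum.swap)
  also have "\<dots> = (\<Sum>X\<in>D. p ^ 3)"
  proof (rule sum.cong[OF refl])
    fix X assume X: "X \<in> D"
    have "card X = 3" "X \<subseteq> V" using triangle_card[OF assms(1)] X by (auto simp: D_def)
    then show "(\<Sum>S\<in>Pow V. if X \<subseteq> S then w S else 0) = p ^ 3" using wsub by metis
  qed
  finally have wt: "(\<Sum>S\<in>Pow V. w S * real (card (tri S))) = real t * p ^ 3"
    using assms(3) by (simp add: D_def)
  have wf: "(\<Sum>S\<in>Pow V. w S * f S) = real n * p - real t * p ^ 3"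
    unfolding f_def using wc wt by (simp add: right_diff_distrib sum_subtractf)
  have val: "real n * p - real t * p ^ 3 = 2/3 * real n * p"
  proof -
    have "real t * p ^ 3 = real t * p^2 * p" by (simp add: power3_eq_cube power2_eq_square)
    also have "\<dots> = real n / 3 * p" using p2 tpos by simp
    finally show ?thesis by simp
  qed
  have p1: "p \<le> 1" unfolding p_def using assms(4) tpos by (simp add: real_sqrt_le_1_iff)
  have wpos: "\<And>S. w S \<ge> 0" unfolding w_def using p0 p1 by simp
  define M where "M = Max (f ` Pow V)"
  have Mge: "\<And>S. S \<in> Pow V \<Longrightarrow> f S \<le> M" unfolding M_def using fin by simp
  have "M \<in> f ` Pow V" unfolding M_def using fin by (intro Max_in) auto
  then obtain S where S: "S \<subseteq> V" "f S = M" by auto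
  have "(\<Sum>S\<in>Pow V. w S * f S) \<le> (\<Sum>S\<in>Pow V. w S * M)"
    by (intro sum_mono mult_left_mono Mge wpos) auto
  also have "\<dots> = M" using w1 by (simp add: sum_distrib_right[symmetric])
  finally have fS: "f S \<ge> 2/3 * real n * p" using wf val S by simp
  define g where "g = (\<lambda>X::'a set. SOME x. x \<in> X)"
  define S' where "S' = S - g ` tri S"
  have finS: "finite S" using S fin by (meson finite_subset)
  have fintri: "finite (tri S)" unfolding tri_def using finD by simp
  have "card S - card (g ` tri S) \<le> card S'" unfolding S'_def by (rule diff_card_le_card_Diff) (simp add: fintri)
  moreover have "card (g ` tri S) \<le> card (tri S)" by (rule card_image_le[OF fintri])
  ultimately have "real (card S) - real (card (tri S)) \<le> real (card S')" by linarith
  then have c1: "f S \<le> real (card S')" unfolding f_def .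
  have "\<forall>X\<in>D. \<not> X \<subseteq> S'"
  proof (intro ballI notI)
    fix X assume X: "X \<in> D" "X \<subseteq> S'"
    then have "X \<in> tri S" unfolding tri_def S'_def by auto
    moreover have "card X = 3" using triangle_card[OF assms(1)] X by (auto simp: D_def)
    then have "X \<noteq> {}" by auto
    then have "g X \<in> X" unfolding g_def by (meson ex_in_conv someI_ex)
    ultimately show False using X unfolding S'_def by auto
  qed
  moreover have "S' \<subseteq> V" using S unfolding S'_def by blast
  ultimately have "acyclic_set V E S'"
    using triangle_free_acyclic[OF assms(1), of S'] unfolding D_def by blast
  then have "card S' \<le> alpha V E" by (rule alpha_ge[OF assms(1)])
  then have "real (card S') \<le> real (alpha V E)" by simp
  then have "2/3 * real n * p \<le> real (alpha V E)" using fS c1 by linarith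
  then show ?thesis unfolding p_def .
qed

end
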